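(* For every $\beta\in[\frac12,1)$ and every integer $k\ge2$, $$Q^{-1}(k,\beta)\le\frac{k}{k+1}\,Q^{-1}(k+1,\beta).$$
   Context: For an integer $k\ge1$ and $\lambda\ge0$, $Q(k,\lambda)=\Gamma(k,\lambda)/\Gamma(k)=\mathbb{P}(\operatorname{Poi}(\lambda)\le k-1)$ (regularized upper incomplete gamma function); $Q(k,\cdot)$ decreases strictly from $1$ to $0$, and for $\beta\in(0,1)$, $Q^{-1}(k,\beta)$ is the unique $\lambda>0$ with $Q(k,\lambda)=\beta$. *)

theory Defs
  imports "HOL-Analysis.Analysis"
begin

text \<open>Regularized upper incomplete gamma function for integer k \<ge> 1:
  Q(k, lambda) = P(Poi(lambda) \<le> k - 1).\<close>
definition Q :: "nat \<Rightarrow> real \<Rightarrow> real" where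
  "Q k l = (\<Sum>j<k. exp (- l) * l ^ j / fact j)"

definition Q_inv :: "nat \<Rightarrow> real \<Rightarrow> real" where
  "Q_inv k b = (THE l. l > 0 \<and> Q k l = b)"

end

theory Submission
  imports Defs
begin

lemma sum_le_exp:
  fixes x :: real assumes "0 \<le> x"
  shows "(\<Sum>n<N. x ^ n / fact n) \<le> exp x"
proof -
  have s: "summable (\<lambda>n. x ^ n / fact n)"
    using summable_exp[of x] by (simp add: inverse_eq_divide)
  have "(\<Sum>n<N. x ^ n / fact n) \<le> (\<Sum>n. x ^ n / fact n)"
    by (rule sum_le_suminf[OF s]) (use assms in auto)
  also have "\<dots> = exp x" by (simp add: exp_def scaleR_conv_of_real divide_inverse mult.commute)
  finally show ?thesis .
qed

lemma Q_Suc: "Q (Suc k) l = Q k l + exp (- l) * l ^ k / fact k"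
  by (simp add: Q_def)

lemma Q_zero_Suc: "Q (Suc m) 0 = 1"
  by (induction m) (simp_all add: Q_Suc, simp add: Q_def)

lemma Q_zero: "k \<ge> 1 \<Longrightarrow> Q k 0 = 1"
  using Q_zero_Suc by (cases k) auto

lemma term_deriv: "((\<lambda>l. exp (- l) * l ^ Suc k / fact (Suc k)) has_real_derivative
     (exp (- l) * l ^ k / fact k - exp (- l) * l ^ Suc k / fact (Suc k))) (at l)"
proof -
  have "((\<lambda>l. exp (- l) * l ^ Suc k / fact (Suc k)) has_real_derivative
     ((- exp (- l)) * l ^ Suc k + exp (- l) * (real (Suc k) * l ^ k)) / fact (Suc k)) (at l)"
  proof -
    have dexp: "((\<lambda>l. exp (- l)) has_real_derivative - exp (- l)) (at l)"
      by (auto intro!: derivative_eq_intros)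
    have "((\<lambda>x. exp (- x) * x ^ Suc k) has_real_derivative
        (- exp (- l)) * l ^ Suc k + exp (- l) * (real (Suc k) * l ^ k)) (at l)"
      using DERIV_mult'[OF dexp DERIV_pow[of "Suc k" l]] by (simp add: algebra_simps)
    then show ?thesis by (rule DERIV_cdivide)
  qed
  moreover have "((- exp (- l)) * l ^ Suc k + exp (- l) * (real (Suc k) * l ^ k)) / fact (Suc k)
      = exp (- l) * l ^ k / fact k - exp (- l) * l ^ Suc k / fact (Suc k)"
  proof -
    have "exp (- l) * (real (Suc k) * l ^ k) / fact (Suc k) = exp (- l) * l ^ k / fact k"
      by (simp add: fact_Suc del: of_nat_Suc)
    then show ?thesis by (simp add: diff_divide_distrib add_divide_distrib)
  qed
  ultimately show ?thesis by simp
qed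

lemma Q_deriv: "(Q (Suc k) has_real_derivative (- exp (- l) * l ^ k / fact k)) (at l)"
proof (induction k)
  case 0
  have "Q (Suc 0) = (\<lambda>l. exp (- l))" by (auto simp: Q_def)
  then show ?case by (auto intro!: derivative_eq_intros)
next
  case (Suc k)
  have e: "Q (Suc (Suc k)) = (\<lambda>l. Q (Suc k) l + exp (- l) * l ^ Suc k / fact (Suc k))"
    by (rule ext) (rule Q_Suc)
  have "((\<lambda>l. Q (Suc k) l + exp (- l) * l ^ Suc k / fact (Suc k)) has_real_derivative
     (- exp (- l) * l ^ k / fact k) + (exp (- l) * l ^ k / fact k - exp (- l) * l ^ Suc k / fact (Suc k))) (at l)"
    by (rule DERIV_add[OF Suc.IH term_deriv])
  moreover have "(- exp (- l) * l ^ k / fact k) + (exp (- l) * l ^ k / fact k - exp (- l) * l ^ Suc k / fact (Suc k))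
      = - exp (- l) * l ^ Suc k / fact (Suc k)"
    by simp
  ultimately show ?case using e by simp
qed

lemma Q_cont: "continuous_on S (Q k)"
  unfolding Q_def by (intro continuous_intros) auto

lemma Q_strict_dec:
  assumes "0 \<le> a" "a < b" "k \<ge> 1"
  shows "Q k b < Q k a"
proof -
  obtain m where k: "k = Suc m" using assms(3) by (cases k) auto
  obtain z where z: "z > a" "z < b" "Q k b - Q k a = (b - a) * (- exp (- z) * z ^ m / fact m)"
    using MVT2[OF assms(2), of "Q k" "\<lambda>l. - exp (- l) * l ^ m / fact m"] Q_deriv k by blast
  have "z > 0" using z assms by linarith
  then have "(b - a) * (- exp (- z) * z ^ m / fact m) < 0"
    using assms by (intro mult_pos_neg) (auto intro!: divide_pos_pos)
  then show ?thesis using z by linarith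
qed

lemma Q_small:
  assumes "k \<ge> 1" "l > 0"
  shows "Q k l \<le> real k ^ 2 / l"
proof -
  have "Q k l \<le> (\<Sum>j<k. real k / l)"
    unfolding Q_def
  proof (rule sum_mono)
    fix j assume j: "j \<in> {..<k}"
    have "l ^ Suc j / fact (Suc j) \<le> (\<Sum>n<Suc (Suc j). l ^ n / fact n)"
      by (rule member_le_sum) (use assms in auto)
    also have "\<dots> \<le> exp l" by (rule sum_le_exp) (use assms in auto)
    finally have h: "l ^ Suc j / fact (Suc j) \<le> exp l" .
    have "exp (- l) * l ^ j / fact j = (l ^ Suc j / fact (Suc j)) * (real (Suc j) / l) / exp l"
    proof -
      have aux: "(l * x / (J * F)) * (J / l) / E = x / F / E"
        if "J \<noteq> 0" "l \<noteq> 0" "F \<noteq> 0" "E \<noteq> 0" for J F E x :: real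
        using that by (simp add: field_simps)
      have "(l ^ Suc j / fact (Suc j)) * (real (Suc j) / l) / exp l
          = (l * l ^ j / (real (Suc j) * fact j)) * (real (Suc j) / l) / exp l"
        by (simp only: fact_Suc power_Suc of_nat_mult)
      also have "\<dots> = l ^ j / fact j / exp l"
        by (rule aux) (use assms in auto)
      finally show ?thesis by (simp add: exp_minus divide_inverse mult.commute mult.left_commute)
    qed
    also have "\<dots> \<le> exp l * (real (Suc j) / l) / exp l"
      using h assms by (intro divide_right_mono mult_right_mono) auto
    also have "\<dots> = real (Suc j) / l" by simp
    also have "\<dots> \<le> real k / l" using j assms by (intro divide_right_mono) auto
    finally show "exp (- l) * l ^ j / fact j \<le> real k / l" .
  qed
  also have "\<dots> = real k ^ 2 / l" by (simp add: power2_eq_square)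
  finally show ?thesis .
qed

lemma Q_inv_spec:
  assumes "k \<ge> 1" "0 < b" "b < 1"
  shows "Q_inv k b > 0 \<and> Q k (Q_inv k b) = b"
proof -
  define M where "M = real k ^ 2 / b + 1"
  have M: "M > 0" unfolding M_def using assms by (auto intro: add_nonneg_pos)
  have "Q k M \<le> real k ^ 2 / M" by (rule Q_small) (use assms M in auto)
  also have "\<dots> \<le> b"
  proof -
    have "real k ^ 2 / b \<le> M" unfolding M_def by simp
    then have "real k ^ 2 \<le> b * M" using assms(2) by (simp add: divide_le_eq mult.commute)
    then show ?thesis using M by (simp add: divide_le_eq)
  qed
  finally have QM: "Q k M \<le> b" .
  have Q0: "b \<le> Q k 0" using Q_zero assms by simp
  obtain x where x: "x \<ge> 0" "x \<le> M" "Q k x = b"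
    using IVT2'[of "Q k" M b 0, OF QM Q0 _ Q_cont] M by auto
  have x0: "x > 0"
  proof (rule ccontr)
    assume "\<not> x > 0"
    then have "x = 0" using x by simp
    then show False using x Q_zero assms by simp
  qed
  have uniq: "y = x" if y: "y > 0" "Q k y = b" for y
  proof (rule ccontr)
    assume "y \<noteq> x"
    then consider "y < x" | "x < y" by linarith
    then show False
    proof cases
      case 1
      have "Q k x < Q k y" by (rule Q_strict_dec) (use 1 y assms in auto)
      then show False using x y by simp
    next
      case 2
      have "Q k y < Q k x" by (rule Q_strict_dec) (use 2 x0 assms in auto)
      then show False using x y by simp
    qed
  qed
  have "Q_inv k b = x"
    unfolding Q_inv_def
  proof (rule the_equality)
    show "x > 0 \<and> Q k x = b" using x x0 by simp
    show "\<And>y. y > 0 \<and> Q k y = b \<Longrightarrow> y = x" using uniq by blast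
  qed
  then show ?thesis using x x0 by simp
qed

lemma fact_ineq0:
  "fact (2 * i + 1 + j) \<le> ((i + 1 + j) ^ (2 * i + 1) * fact j :: nat)"
proof (induction i arbitrary: j)
  case 0
  show ?case by simp
next
  case (Suc i)
  have IH: "fact (2 * i + 1 + (j + 1)) \<le> ((i + 1 + (j + 1)) ^ (2 * i + 1) * fact (j + 1) :: nat)"
    by (rule Suc.IH)
  have id: "(i + 2 + j) * (i + 2 + j) = (2 * i + 3 + j) * (j + 1) + (i + 1) * (i + 1)"
    by (simp add: algebra_simps)
  have sq: "(2 * i + 3 + j) * (j + 1) \<le> (i + 2 + j) * (i + 2 + j)"
    unfolding id by simp
  have e1: "2 * Suc i + 1 + j = Suc (2 * i + 1 + (j + 1))" by simp
  have "fact (2 * Suc i + 1 + j) = (2 * i + 3 + j) * (fact (2 * i + 1 + (j + 1)) :: nat)"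
  proof -
    have e2: "Suc (2 * i + 1 + (j + 1)) = 2 * i + 3 + j" by simp
    have "fact (2 * Suc i + 1 + j) = (fact (Suc (2 * i + 1 + (j + 1))) :: nat)"
      by (rule arg_cong[where f=fact]) simp
    also have "\<dots> = Suc (2 * i + 1 + (j + 1)) * fact (2 * i + 1 + (j + 1))" by (simp only: fact_Suc of_nat_id)
    also have "\<dots> = (2 * i + 3 + j) * fact (2 * i + 1 + (j + 1))" by (simp only: e2)
    finally show ?thesis .
  qed
  also have "\<dots> \<le> (2 * i + 3 + j) * ((i + 2 + j) ^ (2 * i + 1) * fact (j + 1))"
    using IH by (intro mult_left_mono) (simp_all add: add.assoc)
  also have "\<dots> = ((2 * i + 3 + j) * (j + 1)) * ((i + 2 + j) ^ (2 * i + 1) * fact j)"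
    by (simp add: algebra_simps)
  also have "\<dots> \<le> ((i + 2 + j) * (i + 2 + j)) * ((i + 2 + j) ^ (2 * i + 1) * fact j)"
    by (rule mult_right_mono[OF sq]) simp
  also have "\<dots> = (Suc i + 1 + j) ^ (2 * Suc i + 1) * fact j"
    by (simp add: algebra_simps power_add power2_eq_square)
  finally show ?case .
qed

lemma fact_ineq:
  fixes k i :: nat assumes "i < k"
  shows "fact (k + i) \<le> (k ^ (2 * i + 1) * fact (k - 1 - i) :: nat)"
proof -
  have a: "2 * i + 1 + (k - 1 - i) = k + i" using assms by arith
  have b: "i + 1 + (k - 1 - i) = k" using assms by arith
  show ?thesis using fact_ineq0[of i "k - 1 - i"] unfolding a b .
qed

lemma Q_kk:
  assumes "k \<ge> 1"
  shows "Q k (real k) \<le> 1/2"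
proof -
  define p where "p j = real k ^ j / fact j" for j
  have pi: "p (k - 1 - i) \<le> p (k + i)" if "i < k" for i
  proof -
    have h: "real (fact (k + i)) \<le> real (k ^ (2 * i + 1) * fact (k - 1 - i))"
      using fact_ineq[OF that] by linarith
    have kk: "real k ^ (k + i) = real k ^ (k - 1 - i) * real k ^ (2 * i + 1)"
    proof -
      have e: "k + i = (k - 1 - i) + (2 * i + 1)" using that by arith
      show ?thesis by (simp only: e power_add)
    qed
    have "p (k - 1 - i) = real k ^ (k - 1 - i) * real k ^ (2 * i + 1) / (real k ^ (2 * i + 1) * fact (k - 1 - i))"
      unfolding p_def using assms by simp
    also have "\<dots> \<le> real k ^ (k - 1 - i) * real k ^ (2 * i + 1) / fact (k + i)"
      using h assms by (intro divide_left_mono) (auto simp: of_nat_mult)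
    also have "\<dots> = p (k + i)" unfolding p_def kk by simp
    finally show ?thesis .
  qed
  have "(\<Sum>j<k. p j) = (\<Sum>i<k. p (k - 1 - i))"
    by (rule sum.reindex_bij_witness[where i="\<lambda>i. k - 1 - i" and j="\<lambda>i. k - 1 - i"]) auto
  also have "\<dots> \<le> (\<Sum>i<k. p (k + i))" by (rule sum_mono) (use pi in auto)
  also have "\<dots> = (\<Sum>j\<in>{k..<2*k}. p j)"
    by (rule sum.reindex_bij_witness[where i="\<lambda>j. j - k" and j="\<lambda>i. k + i"]) auto
  finally have le: "(\<Sum>j<k. p j) \<le> (\<Sum>j\<in>{k..<2*k}. p j)" .
  have "(\<Sum>j<2*k. p j) = (\<Sum>j<k. p j) + (\<Sum>j\<in>{k..<2*k}. p j)"
    by (metis lessThan_atLeast0 mult_2 sum.atLeastLessThan_concat le_add1 zero_le)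
  moreover have "(\<Sum>j<2*k. p j) \<le> exp (real k)" unfolding p_def by (rule sum_le_exp) auto
  ultimately have "2 * (\<Sum>j<k. p j) \<le> exp (real k)" using le by linarith
  moreover have "Q k (real k) = exp (- real k) * (\<Sum>j<k. p j)"
    unfolding Q_def p_def by (simp add: sum_distrib_left)
  ultimately have e: "Q k (real k) = (\<Sum>j<k. p j) / exp (real k)" and
      le2: "(\<Sum>j<k. p j) \<le> exp (real k) / 2"
    by (simp_all add: exp_minus field_simps)
  have "Q k (real k) \<le> (exp (real k) / 2) / exp (real k)"
    unfolding e by (rule divide_right_mono[OF le2]) simp
  then show ?thesis by simp
qed

lemma pade:
  fixes x :: real assumes "0 \<le> x" "x < 2"
  shows "(2 - x) * exp x \<le> 2 + x"
proof -
  define f :: "real \<Rightarrow> real" where "f x = (2 + x) - (2 - x) * exp x" for x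
  have "f 0 \<le> f x"
  proof (rule DERIV_nonneg_imp_nondecreasing[OF assms(1)])
    fix y :: real assume y: "0 \<le> y" "y \<le> x"
    have "(f has_real_derivative (1 - ((-1) * exp y + (2 - y) * exp y))) (at y)"
      unfolding f_def[abs_def] by (auto intro!: derivative_eq_intros)
    moreover have "1 - ((-1) * exp y + (2 - y) * exp y) \<ge> 0"
    proof -
      have "1 - y \<le> exp (- y)" using exp_ge_add_one_self[of "-y"] by simp
      then have "(1 - y) * exp y \<le> exp (-y) * exp y" by (intro mult_right_mono) auto
      then show ?thesis by (simp add: exp_minus algebra_simps)
    qed
    ultimately show "\<exists>d. (f has_real_derivative d) (at y) \<and> 0 \<le> d" by blast
  qed
  then show ?thesis by (simp add: f_def)
qed

lemma key:
  assumes k: "k \<ge> 1" and lp: "0 < lam" and lk: "lam \<le> real k"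
  shows "Q k lam \<le> Q (k + 1) (real (k + 1) / real k * lam)"
proof -
  obtain m where km: "k = Suc m" using k by (cases k) auto
  define L where "L = lam / real k"
  define x1 where "x1 = real (k + 1) * L"
  have L: "0 < L" "L \<le> 1" using lp lk k by (auto simp: L_def field_simps)
  have x1: "x1 = real (k + 1) / real k * lam" unfolding x1_def L_def by simp
  have lam: "lam = x1 - L" unfolding x1_def L_def using k by (simp add: field_simps)
  define A where "A = exp (- x1) * x1 ^ m / fact m"
  have A0: "A \<ge> 0" unfolding A_def using L by (auto simp: x1_def)
  define K where "K = real (k + 1) * L"
  have K: "K > 0" "K = x1" using L by (auto simp: K_def x1_def)
  define B where "B x = - A * (K / 2) * exp (2 * (x1 - x) / K)" for x
  define F where "F x = B x + Q k x" for x
  have "F lam \<le> F x1"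
  proof (rule DERIV_nonneg_imp_nondecreasing[of lam x1 F])
    show "lam \<le> x1" using lam L by simp
  next
    fix x assume xr: "lam \<le> x" "x \<le> x1"
    have dB: "(B has_real_derivative (A * exp (2 * (x1 - x) / K))) (at x)"
      unfolding B_def[abs_def] using K by (auto intro!: derivative_eq_intros)
    have dQ: "(Q k has_real_derivative (- exp (- x) * x ^ m / fact m)) (at x)"
      using Q_deriv km by simp
    have dF: "(F has_real_derivative (A * exp (2 * (x1 - x) / K) + (- exp (- x) * x ^ m / fact m))) (at x)"
      unfolding F_def[abs_def] by (intro derivative_intros dB dQ)
    define w where "w = x1 - x"
    have w: "0 \<le> w" "w \<le> L" using xr lam unfolding w_def by auto
    have x0: "0 \<le> x" using xr lp by simp
    have xle: "x \<le> x1 * exp (- w / x1)"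
    proof -
      have "1 - w / x1 \<le> exp (- w / x1)" using exp_ge_add_one_self[of "- w / x1"] by simp
      then have "x1 * (1 - w / x1) \<le> x1 * exp (- w / x1)" using K by (intro mult_left_mono) auto
      moreover have "x1 * (1 - w / x1) = x" using K unfolding w_def by (simp add: field_simps)
      ultimately show ?thesis by simp
    qed
    have pw: "x ^ m \<le> x1 ^ m * exp (- real m * w / x1)"
    proof -
      have "x ^ m \<le> (x1 * exp (- w / x1)) ^ m" by (rule power_mono[OF xle x0])
      also have "\<dots> = x1 ^ m * exp (- w / x1) ^ m" by (simp add: power_mult_distrib)
      also have "exp (- w / x1) ^ m = exp (real m * (- w / x1))" by (rule exp_of_nat_mult[symmetric])
      finally show ?thesis by simp
    qed
    have expo: "w - real m * w / x1 \<le> 2 * w / K"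
    proof -
      have Lw: "L * w \<le> w" using w L by (simp add: mult_left_le_one_le)
      have "w * x1 = (L * w) * real (k + 1)" unfolding x1_def by simp
      also have "\<dots> \<le> w * real (k + 1)" by (rule mult_right_mono[OF Lw]) simp
      finally have "w * x1 \<le> w * real (k + 1)" .
      then have "w * x1 - real m * w \<le> 2 * w" using km by (simp add: algebra_simps)
      then have "(w * x1 - real m * w) / x1 \<le> (2 * w) / x1"
        using K by (intro divide_right_mono) auto
      moreover have "(w * x1 - real m * w) / x1 = w - real m * w / x1"
        using K by (simp add: field_simps)
      ultimately show ?thesis using K by simp
    qed
    have "exp (- x) * x ^ m / fact m \<le> exp (- x) * (x1 ^ m * exp (- real m * w / x1)) / fact m"
      by (intro divide_right_mono mult_left_mono pw) auto
    also have "\<dots> = A * exp (w - real m * w / x1)"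
    proof -
      have e1: "exp (- x) = exp (- x1) * exp w" unfolding w_def by (simp add: exp_add[symmetric])
      have "w - real m * w / x1 = w + (- real m * w / x1)" by simp
      then have e2: "exp (w - real m * w / x1) = exp w * exp (- real m * w / x1)"
        by (simp only: exp_add)
      show ?thesis unfolding A_def e1 e2 by (simp add: mult_ac)
    qed
    also have "\<dots> \<le> A * exp (2 * (x1 - x) / K)"
      using expo A0 unfolding w_def by (intro mult_left_mono) auto
    finally have "0 \<le> A * exp (2 * (x1 - x) / K) + (- exp (- x) * x ^ m / fact m)" by simp
    then show "\<exists>y. (F has_real_derivative y) (at x) \<and> 0 \<le> y" using dF by blast
  qed
  then have main: "Q k lam - Q k x1 \<le> B x1 - B lam" unfolding F_def by simp
  have "B x1 - B lam = A * (K / 2) * (exp (2 / real (k + 1)) - 1)"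
  proof -
    have "x1 - lam = L" using lam by simp
    then have ex: "2 * (x1 - lam) / K = 2 / real (k + 1)" unfolding K_def using L by simp
    show ?thesis unfolding B_def ex by (simp add: algebra_simps)
  qed
  also have "\<dots> \<le> A * (K / 2) * (2 / real k)"
  proof -
    have p: "(2 - 2 / real (k + 1)) * exp (2 / real (k + 1)) \<le> 2 + 2 / real (k + 1)"
      by (rule pade) (use k in \<open>auto simp: field_simps\<close>)
    have "2 - 2 / real (k + 1) = 2 * real k / real (k + 1)" by (simp add: field_simps)
    moreover have "2 + 2 / real (k + 1) = 2 * (real k + 2) / real (k + 1)" by (simp add: field_simps)
    ultimately have p2: "(2 * real k / real (k + 1)) * exp (2 / real (k + 1)) \<le> 2 * (real k + 2) / real (k + 1)"
      using p by simp
    have "real (k + 1) / 2 * ((2 * real k / real (k + 1)) * exp (2 / real (k + 1)))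
        \<le> real (k + 1) / 2 * (2 * (real k + 2) / real (k + 1))"
      by (rule mult_left_mono[OF p2]) simp
    moreover have "real (k + 1) / 2 * ((2 * real k / real (k + 1)) * exp (2 / real (k + 1)))
        = real k * exp (2 / real (k + 1))" by (simp add: field_simps)
    moreover have "real (k + 1) / 2 * (2 * (real k + 2) / real (k + 1)) = real k + 2"
      by (simp add: field_simps)
    ultimately have "real k * exp (2 / real (k + 1)) \<le> real k + 2" by simp
    then have "exp (2 / real (k + 1)) - 1 \<le> 2 / real k" using k by (simp add: field_simps)
    then show ?thesis using A0 K by (intro mult_left_mono) auto
  qed
  also have "\<dots> = exp (- x1) * x1 ^ k / fact k"
  proof -
    have fk: "(fact k :: real) = real k * fact m" using km by simp
    have xk: "x1 ^ k = x1 * x1 ^ m" using km by simp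
    have k0: "real k \<noteq> 0" using k by simp
    have f0: "(fact m :: real) \<noteq> 0" by simp
    have aux: "e * p / F * (x / 2) * (2 / kk) = e * (x * p) / (kk * F)"
      if "kk \<noteq> 0" "F \<noteq> 0" for e p F x kk :: real
      using that by (simp add: field_simps)
    show ?thesis unfolding fk xk A_def K(2) by (rule aux[OF k0 f0])
  qed
  finally have "Q k lam \<le> Q k x1 + exp (- x1) * x1 ^ k / fact k" using main by simp
  also have "\<dots> = Q (k + 1) x1" using Q_Suc by simp
  finally show ?thesis using x1 by simp
qed

theorem lemma10:
  fixes b :: real and k :: nat
  assumes "1/2 \<le> b" and "b < 1" and "k \<ge> 2"
  shows "Q_inv k b \<le> real k / real (k + 1) * Q_inv (k + 1) b"
proof -
  define lam where "lam = Q_inv k b"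
  define mu where "mu = Q_inv (k + 1) b"
  have l: "lam > 0" "Q k lam = b" using Q_inv_spec[of k b] assms unfolding lam_def by auto
  have u: "mu > 0" "Q (k + 1) mu = b" using Q_inv_spec[of "k+1" b] assms unfolding mu_def by auto
  have lk: "lam \<le> real k"
  proof (rule ccontr)
    assume "\<not> lam \<le> real k"
    then have "Q k lam < Q k (real k)" by (intro Q_strict_dec) (use assms in auto)
    then show False using Q_kk[of k] assms l by auto
  qed
  have q: "b \<le> Q (k + 1) (real (k + 1) / real k * lam)"
    using key[of k lam] l lk assms by auto
  have "real (k + 1) / real k * lam \<le> mu"
  proof (rule ccontr)
    assume "\<not> ?thesis"
    then have "Q (k + 1) (real (k + 1) / real k * lam) < Q (k + 1) mu"
      by (intro Q_strict_dec) (use u in auto)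
    then show False using q u by simp
  qed
  then have "real k * (real (k + 1) / real k * lam) \<le> real k * mu" by (intro mult_left_mono) auto
  moreover have "real k * (real (k + 1) / real k * lam) = real (k + 1) * lam" using assms by simp
  ultimately have "real (k + 1) * lam \<le> real k * mu" by linarith
  then have "lam \<le> (real k * mu) / real (k + 1)"
    by (subst pos_le_divide_eq) (auto simp: mult.commute)
  then show ?thesis unfolding lam_def mu_def by simp
qed

end
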